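(* Let $n$ be a positive multiple of $3$ and $0\le m\le n/3$ an integer. Let $\mathcal{G}(n,m)$ be the $3$-graph defined in the context. Then the number $\varphi(n,m)$ of $4$-subsets of $[n]$ that induce exactly three edges in $\mathcal{G}(n,m)$ (i.e. induced copies of $K_4^{3-}$) equals $$\varphi(n,m)=\frac{1}{6}m^2(n-3m)(n-3m-3).$$
   Context: Let $[n]=V_1\cup V_2\cup V_3$ be a partition with $|V_j|=n/3$, and for $j\in[3]$ let $V_j=V_{1,j}\cup V_{2,j}$ be a partition with $|V_{1,j}|=m$ and $|V_{2,j}|=n/3-m$. Indices $j$ are taken modulo $3$. The $3$-graph $\mathcal{G}(n,m)$ on $[n]$ has as edges all triples $\{a,b,c\}$ of distinct vertices of the following forms: (1) $a,b,c\in V_{i,j}$ for some $i\in[2]$, $j\in[3]$; (2) $a,b\in V_{1,j}$, $c\in V_{2,j}$; (3) $a,b\in V_{1,j}$, $c\in V_{j+1}$; (4) $a,b\in V_{2,j}$, $c\in V_{1,j+1}$; (5) $a,b\in V_{2,j}$, $c\in V_{j-1}$; (6) $a\in V_{1,j}$, $b\in V_{2,j}$, $c\in V_{j+1}$ (for some $j\in[3]$). $K_4^{3-}$ denotes the $3$-graph on four vertices with three edges. *)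

theory Defs
  imports Complex_Main
begin

text \<open>A vertex v of [n] = {1..n} carries a label lab v = (i, j) with i in {1,2}
  and j in {0,1,2}, meaning v belongs to V_{i,j}. The index j of the paper
  (taken modulo 3) is represented by j mod 3 in {0,1,2}.\<close>

definition valid_labelling :: "nat \<Rightarrow> nat \<Rightarrow> (nat \<Rightarrow> nat \<times> nat) \<Rightarrow> bool" where
  "valid_labelling n m lab \<longleftrightarrow>
     (\<forall>v\<in>{1..n}. fst (lab v) \<in> {1,2} \<and> snd (lab v) \<in> {0,1,2}) \<and>
     (\<forall>j\<in>{0,1,2::nat}. card {v\<in>{1..n}. lab v = (1,j)} = m \<and>
                       card {v\<in>{1..n}. lab v = (2,j)} = n div 3 - m)"

definition edge_form :: "(nat \<Rightarrow> nat \<times> nat) \<Rightarrow> nat \<Rightarrow> nat \<Rightarrow> nat \<Rightarrow> bool" where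
  "edge_form lab a b c \<longleftrightarrow>
     (\<exists>i j. lab a = (i,j) \<and> lab b = (i,j) \<and> lab c = (i,j)) \<or>
     (\<exists>j. lab a = (1,j) \<and> lab b = (1,j) \<and> lab c = (2,j)) \<or>
     (\<exists>j. lab a = (1,j) \<and> lab b = (1,j) \<and> snd (lab c) = (j+1) mod 3) \<or>
     (\<exists>j. lab a = (2,j) \<and> lab b = (2,j) \<and> lab c = (1, (j+1) mod 3)) \<or>
     (\<exists>j. lab a = (2,j) \<and> lab b = (2,j) \<and> snd (lab c) = (j+2) mod 3) \<or>
     (\<exists>j. lab a = (1,j) \<and> lab b = (2,j) \<and> snd (lab c) = (j+1) mod 3)"

definition is_edge :: "nat \<Rightarrow> (nat \<Rightarrow> nat \<times> nat) \<Rightarrow> nat set \<Rightarrow> bool" where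
  "is_edge n lab e \<longleftrightarrow> e \<subseteq> {1..n} \<and>
     (\<exists>a b c. e = {a,b,c} \<and> a \<noteq> b \<and> a \<noteq> c \<and> b \<noteq> c \<and> edge_form lab a b c)"

definition phi :: "nat \<Rightarrow> (nat \<Rightarrow> nat \<times> nat) \<Rightarrow> nat" where
  "phi n lab = card {S. S \<subseteq> {1..n} \<and> card S = 4 \<and>
                        card {e. e \<subseteq> S \<and> is_edge n lab e} = 3}"

end

theory Submission
  imports Defs
begin


definition efl :: "nat \<times> nat \<Rightarrow> nat \<times> nat \<Rightarrow> nat \<times> nat \<Rightarrow> bool" where
  "efl x y z \<longleftrightarrow>
     (\<exists>i j. x = (i,j) \<and> y = (i,j) \<and> z = (i,j)) \<or>
     (\<exists>j. x = (1,j) \<and> y = (1,j) \<and> z = (2,j)) \<or>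
     (\<exists>j. x = (1,j) \<and> y = (1,j) \<and> snd z = (j+1) mod 3) \<or>
     (\<exists>j. x = (2,j) \<and> y = (2,j) \<and> z = (1, (j+1) mod 3)) \<or>
     (\<exists>j. x = (2,j) \<and> y = (2,j) \<and> snd z = (j+2) mod 3) \<or>
     (\<exists>j. x = (1,j) \<and> y = (2,j) \<and> snd z = (j+1) mod 3)"

definition EF where "EF x y z \<longleftrightarrow> efl x y z \<or> efl x z y \<or> efl y x z \<or> efl y z x \<or> efl z x y \<or> efl z y x"

definition ind :: "bool \<Rightarrow> nat" where "ind b = (if b then 1 else 0)"

definition cnt4 where "cnt4 L la lb lc ld = ind (la = L) + ind (lb = L) + ind (lc = L) + ind (ld = L)"

definition Labs :: "(nat \<times> nat) set" where "Labs = {(1,0),(1,1),(1,2),(2,0),(2,1),(2,2)}"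

lemma efl_simp: "efl (a,b) (c,d) (e,f) \<longleftrightarrow>
     (a = c \<and> c = e \<and> b = d \<and> d = f) \<or>
     (a = 1 \<and> c = 1 \<and> e = 2 \<and> b = d \<and> d = f) \<or>
     (a = 1 \<and> c = 1 \<and> b = d \<and> f = (b+1) mod 3) \<or>
     (a = 2 \<and> c = 2 \<and> b = d \<and> e = 1 \<and> f = (b+1) mod 3) \<or>
     (a = 2 \<and> c = 2 \<and> b = d \<and> f = (b+2) mod 3) \<or>
     (a = 1 \<and> c = 2 \<and> b = d \<and> f = (b+1) mod 3)"
  unfolding efl_def by auto

lemma label_lemma:
  assumes "la \<in> Labs" "lb \<in> Labs" "lc \<in> Labs" "ld \<in> Labs"
  shows "(ind (EF la lb lc) + ind (EF la lb ld) + ind (EF la lc ld) + ind (EF lb lc ld) = 3) \<longleftrightarrow>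
    (\<exists>j\<in>{0,1,2}. cnt4 (1,j) la lb lc ld = 1 \<and> cnt4 (1,(j+1) mod 3) la lb lc ld = 1 \<and> cnt4 (2,j) la lb lc ld = 2)"
  using assms unfolding Labs_def
  apply (elim insertE emptyE)
  apply (simp_all add: EF_def efl_simp cnt4_def ind_def)
  done



lemma card4_distinct: "card S = 4 \<Longrightarrow> \<exists>a b c d. S = {a,b,c,d} \<and> distinct [a,b,c,d]"
  by (auto simp: card_Suc_eq numeral_eq_Suc)

lemma card_filter4: "distinct [a,b,c,d] \<Longrightarrow>
   card {v\<in>{a,b,c,d}. P v} = ind (P a) + ind (P b) + ind (P c) + ind (P d)"
proof -
  assume d: "distinct [a,b,c,d]"
  have "card {v\<in>{a,b,c,d}. P v} = (\<Sum>v\<in>{v\<in>{a,b,c,d}. P v}. (1::nat))" by simp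
  also have "\<dots> = (\<Sum>v\<in>{a,b,c,d}. ind (P v))"
    by (subst sum.inter_filter) (auto simp: ind_def)
  also have "\<dots> = ind (P a) + ind (P b) + ind (P c) + ind (P d)" using d by simp
  finally show ?thesis .
qed

lemma edge_form_efl: "edge_form lab a b c = efl (lab a) (lab b) (lab c)"
  unfolding edge_form_def efl_def by simp

lemma perm3: "{x,y,z} = {a,b,c} \<Longrightarrow> distinct [x,y,z] \<Longrightarrow> distinct [a,b,c] \<Longrightarrow>
  (x = a \<and> y = b \<and> z = c) \<or> (x = a \<and> y = c \<and> z = b) \<or> (x = b \<and> y = a \<and> z = c) \<or>
  (x = b \<and> y = c \<and> z = a) \<or> (x = c \<and> y = a \<and> z = b) \<or> (x = c \<and> y = b \<and> z = a)"
proof -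
  assume h: "{x,y,z} = {a,b,c}" "distinct [x,y,z]" "distinct [a,b,c]"
  have "x \<in> {a,b,c}" "y \<in> {a,b,c}" "z \<in> {a,b,c}" "a \<in> {x,y,z}" "b \<in> {x,y,z}" "c \<in> {x,y,z}"
    using h(1) by blast+
  then show ?thesis using h(2,3) by auto
qed

lemma ex_wit: "{a,b,c} = {x,y,z} \<Longrightarrow> distinct [x,y,z] \<Longrightarrow> edge_form lab x y z \<Longrightarrow>
   \<exists>x y z. {a,b,c} = {x,y,z} \<and> x \<noteq> y \<and> x \<noteq> z \<and> y \<noteq> z \<and> edge_form lab x y z"
  by auto

lemma is_edge_triple:
  assumes "distinct [a,b,c]" "{a,b,c} \<subseteq> {1..n}"
  shows "is_edge n lab {a,b,c} \<longleftrightarrow> EF (lab a) (lab b) (lab c)"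
proof
  assume "is_edge n lab {a,b,c}"
  then obtain x y z where e: "{a,b,c} = {x,y,z}" "distinct [x,y,z]" "edge_form lab x y z"
    unfolding is_edge_def by auto
  from perm3[OF e(1)[symmetric] e(2) assms(1)] e(3) show "EF (lab a) (lab b) (lab c)"
    unfolding EF_def edge_form_efl by auto
next
  assume H: "EF (lab a) (lab b) (lab c)"
  have "\<exists>x y z. {a,b,c} = {x,y,z} \<and> x \<noteq> y \<and> x \<noteq> z \<and> y \<noteq> z \<and> edge_form lab x y z"
    using H assms(1) unfolding EF_def
    apply (elim disjE)
    apply (rule ex_wit[of _ _ _ a b c]; simp add: edge_form_efl)
    apply (rule ex_wit[of _ _ _ a c b]; auto simp add: edge_form_efl)
    apply (rule ex_wit[of _ _ _ b a c]; auto simp add: edge_form_efl)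
    apply (rule ex_wit[of _ _ _ b c a]; auto simp add: edge_form_efl)
    apply (rule ex_wit[of _ _ _ c a b]; auto simp add: edge_form_efl)
    apply (rule ex_wit[of _ _ _ c b a]; auto simp add: edge_form_efl)
    done
  then show "is_edge n lab {a,b,c}" using assms(2) unfolding is_edge_def by blast
qed

lemma edge_card3: "is_edge n lab e \<Longrightarrow> card e = 3"
  unfolding is_edge_def by auto

lemma edges_in4:
  assumes d: "distinct [a,b,c,d]" and s: "{a,b,c,d} \<subseteq> {1..n}"
  shows "card {e. e \<subseteq> {a,b,c,d} \<and> is_edge n lab e} =
     ind (EF (lab a) (lab b) (lab c)) + ind (EF (lab a) (lab b) (lab d)) +
     ind (EF (lab a) (lab c) (lab d)) + ind (EF (lab b) (lab c) (lab d))"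
proof -
  let ?S = "{a,b,c,d}"
  have eq: "{e. e \<subseteq> ?S \<and> is_edge n lab e} = {t \<in> {{a,b,c},{a,b,d},{a,c,d},{b,c,d}}. is_edge n lab t}"
  proof (rule set_eqI, rule iffI)
    fix e assume "e \<in> {e. e \<subseteq> ?S \<and> is_edge n lab e}"
    then have sub: "e \<subseteq> ?S" and ie: "is_edge n lab e" by auto
    have c3: "card e = 3" using edge_card3[OF ie] .
    have cS: "card ?S = 4" using d by simp
    have "card (?S - e) = 1" using card_Diff_subset[OF finite_subset[OF sub] sub] c3 cS by simp
    then obtain w where w: "?S - e = {w}" by (auto simp: card_Suc_eq)
    then have "e = ?S - {w}" "w \<in> ?S" using sub by auto
    then have "e \<in> {{a,b,c},{a,b,d},{a,c,d},{b,c,d}}" using d by auto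
    then show "e \<in> {t \<in> {{a,b,c},{a,b,d},{a,c,d},{b,c,d}}. is_edge n lab t}" using ie by simp
  next
    fix e assume "e \<in> {t \<in> {{a,b,c},{a,b,d},{a,c,d},{b,c,d}}. is_edge n lab t}"
    then show "e \<in> {e. e \<subseteq> ?S \<and> is_edge n lab e}" by auto
  qed
  have dd: "distinct [{a,b,c},{a,b,d},{a,c,d},{b,c,d}]" using d by (auto simp: insert_eq_iff)
  have "card {e. e \<subseteq> ?S \<and> is_edge n lab e} = ind (is_edge n lab {a,b,c}) + ind (is_edge n lab {a,b,d})
      + ind (is_edge n lab {a,c,d}) + ind (is_edge n lab {b,c,d})"
    unfolding eq by (rule card_filter4[OF dd])
  also have "\<dots> = ind (EF (lab a) (lab b) (lab c)) + ind (EF (lab a) (lab b) (lab d)) +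
     ind (EF (lab a) (lab c) (lab d)) + ind (EF (lab b) (lab c) (lab d))"
    using d s by (simp add: is_edge_triple)
  finally show ?thesis .
qed



definition GoodC :: "(nat \<Rightarrow> nat \<times> nat) \<Rightarrow> nat \<Rightarrow> nat set \<Rightarrow> bool" where
  "GoodC lab j S \<longleftrightarrow> card {v\<in>S. lab v = (1,j)} = 1 \<and> card {v\<in>S. lab v = (1,(j+1) mod 3)} = 1
      \<and> card {v\<in>S. lab v = (2,j)} = 2"

lemma labs_ok: "valid_labelling n m lab \<Longrightarrow> v \<in> {1..n} \<Longrightarrow> lab v \<in> Labs"
proof -
  assume vl: "valid_labelling n m lab" and v: "v \<in> {1..n}"
  have h: "fst (lab v) \<in> {1,2}" "snd (lab v) \<in> {0,1,2}" using vl v unfolding valid_labelling_def by blast+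
  obtain x y where xy: "lab v = (x,y)" by (cases "lab v")
  have "x = 1 \<or> x = 2" "y = 0 \<or> y = 1 \<or> y = 2" using h xy by auto
  then show "lab v \<in> Labs" unfolding Labs_def xy by auto
qed

lemma charac:
  assumes vl: "valid_labelling n m lab" and S: "S \<subseteq> {1..n}" "card S = 4"
  shows "card {e. e \<subseteq> S \<and> is_edge n lab e} = 3 \<longleftrightarrow> (\<exists>j\<in>{0,1,2}. GoodC lab j S)"
proof -
  obtain a b c d where Sd: "S = {a,b,c,d}" "distinct [a,b,c,d]" using card4_distinct[OF S(2)] by blast
  have L: "lab a \<in> Labs" "lab b \<in> Labs" "lab c \<in> Labs" "lab d \<in> Labs"
    using labs_ok[OF vl] S(1) Sd(1) by auto
  have cn: "card {v\<in>S. lab v = L} = cnt4 L (lab a) (lab b) (lab c) (lab d)" for L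
    unfolding Sd(1) cnt4_def by (rule card_filter4[OF Sd(2)])
  show ?thesis
    unfolding Sd(1) edges_in4[OF Sd(2) S(1)[unfolded Sd(1)]] label_lemma[OF L]
    unfolding GoodC_def cn[unfolded Sd(1)] ..
qed



lemma mod3ne: "(j+1) mod 3 \<noteq> (j::nat)" by presburger

lemma filters:
  fixes lab :: "nat \<Rightarrow> nat \<times> nat" and j :: nat
  assumes "lab a = (1,j)" "lab b = (1,(j+1) mod 3)" "\<forall>v\<in>P. lab v = (2,j)"
  shows "{v\<in>insert a (insert b P). lab v = (1,j)} = {a}"
        "{v\<in>insert a (insert b P). lab v = (1,(j+1) mod 3)} = {b}"
        "{v\<in>insert a (insert b P). lab v = (2,j)} = P"
  using assms mod3ne[of j] by auto

lemma card_G: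
  assumes vl: "valid_labelling n m lab" and j: "j \<in> {0,1,2::nat}"
  shows "card {S. S \<subseteq> {1..n} \<and> card S = 4 \<and> GoodC lab j S} = m * m * ((n div 3 - m) choose 2)"
proof -
  define j' where "j' = (j+1) mod 3"
  have j': "j' \<in> {0,1,2}" unfolding j'_def by auto
  have jj: "j' \<noteq> j" unfolding j'_def using j by auto
  define V where "V L = {v\<in>{1..n}. lab v = L}" for L
  define D where "D = V (1,j) \<times> V (1,j') \<times> {P. P \<subseteq> V (2,j) \<and> card P = 2}"
  define f where "f = (\<lambda>(a::nat,b::nat,P). insert a (insert b P))"
  have cV: "card (V (1,j)) = m" "card (V (1,j')) = m" "card (V (2,j)) = n div 3 - m"
    using vl j j' unfolding valid_labelling_def V_def by blast+
  have fV: "finite (V L)" for L unfolding V_def by auto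
  have cD: "card D = m * m * ((n div 3 - m) choose 2)"
    unfolding D_def card_cartesian_product n_subsets[OF fV] cV by simp
  have inD: "lab a = (1,j) \<and> lab b = (1,j') \<and> (\<forall>v\<in>P. lab v = (2,j)) \<and> a \<in> {1..n} \<and> b \<in> {1..n}
     \<and> P \<subseteq> {1..n} \<and> card P = 2" if "(a,b,P) \<in> D" for a b P
    using that unfolding D_def V_def by auto
  have inj: "inj_on f D"
  proof (rule inj_onI)
    fix x y assume x: "x \<in> D" and y: "y \<in> D" and e: "f x = f y"
    obtain a b P where xe: "x = (a,b,P)" by (cases x)
    obtain a' b' P' where ye: "y = (a',b',P')" by (cases y)
    have h1: "lab a = (1,j)" "lab b = (1,(j+1) mod 3)" "\<forall>v\<in>P. lab v = (2,j)"
      using inD[OF x[unfolded xe]] j'_def by auto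
    have h2: "lab a' = (1,j)" "lab b' = (1,(j+1) mod 3)" "\<forall>v\<in>P'. lab v = (2,j)"
      using inD[OF y[unfolded ye]] j'_def by auto
    have e': "insert a (insert b P) = insert a' (insert b' P')" using e xe ye f_def by simp
    have "{a} = {a'}" using filters(1)[OF h1] filters(1)[OF h2] e' by metis
    moreover have "{b} = {b'}" using filters(2)[OF h1] filters(2)[OF h2] e' by metis
    moreover have "P = P'" using filters(3)[OF h1] filters(3)[OF h2] e' by metis
    ultimately show "x = y" using xe ye by simp
  qed
  have img: "f ` D = {S. S \<subseteq> {1..n} \<and> card S = 4 \<and> GoodC lab j S}"
  proof (rule set_eqI, rule iffI)
    fix S assume "S \<in> f ` D"
    then obtain a b P where abP: "(a,b,P) \<in> D" "S = insert a (insert b P)" unfolding f_def by auto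
    note h = inD[OF abP(1)]
    have h1: "lab a = (1,j)" "lab b = (1,(j+1) mod 3)" "\<forall>v\<in>P. lab v = (2,j)"
      using h j'_def by auto
    have fP: "finite P" using h by (metis card.infinite zero_neq_numeral)
    have "a \<notin> insert b P" "b \<notin> P" using h1 jj j'_def by auto
    then have "card S = 4" using abP(2) fP h by simp
    then show "S \<in> {S. S \<subseteq> {1..n} \<and> card S = 4 \<and> GoodC lab j S}"
      unfolding GoodC_def using abP(2) h filters[OF h1] by auto
  next
    fix S assume "S \<in> {S. S \<subseteq> {1..n} \<and> card S = 4 \<and> GoodC lab j S}"
    then have S: "S \<subseteq> {1..n}" "card S = 4" "GoodC lab j S" by auto
    have c1: "card {v\<in>S. lab v = (1,j)} = 1" "card {v\<in>S. lab v = (1,j')} = 1"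
      using S(3) unfolding GoodC_def j'_def by auto
    obtain a where a: "{v\<in>S. lab v = (1,j)} = {a}" using card_1_singletonE[OF c1(1)] by blast
    obtain b where b: "{v\<in>S. lab v = (1,j')} = {b}" using card_1_singletonE[OF c1(2)] by blast
    define P where "P = {v\<in>S. lab v = (2,j)}"
    have cP: "card P = 2" using S(3) unfolding GoodC_def P_def by auto
    have abS: "a \<in> S" "b \<in> S" "lab a = (1,j)" "lab b = (1,j')" using a b by blast+
    have PS: "P \<subseteq> S" unfolding P_def by auto
    have inDD: "(a,b,P) \<in> D" unfolding D_def V_def using abS S(1) PS cP P_def by auto
    have fP: "finite P" using cP by (metis card.infinite zero_neq_numeral)
    have "a \<notin> insert b P" "b \<notin> P" using abS jj P_def by auto
    then have c4: "card (insert a (insert b P)) = 4" using fP cP by simp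
    have sub: "insert a (insert b P) \<subseteq> S" using abS PS by auto
    have fS: "finite S" using S(2) by (metis card.infinite zero_neq_numeral)
    have "insert a (insert b P) = S" using card_subset_eq[OF fS sub] c4 S(2) by simp
    then show "S \<in> f ` D" using inDD unfolding f_def by force
  qed
  show ?thesis using card_image[OF inj] img cD by simp
qed



lemma good_unique:
  fixes lab :: "nat \<Rightarrow> nat \<times> nat"
  assumes S: "finite S" "card S = 4" and g: "GoodC lab j S" "GoodC lab k S" and jk: "j \<noteq> k"
  shows False
proof -
  define A where "A L = {v\<in>S. lab v = L}" for L
  have fA: "finite (A L)" for L using S(1) unfolding A_def by auto
  have dis: "L1 \<noteq> L2 \<Longrightarrow> A L1 \<inter> A L2 = {}" for L1 L2 unfolding A_def by auto
  have c: "card (A (1,j)) = 1" "card (A (1,(j+1) mod 3)) = 1" "card (A (2,j)) = 2" "card (A (2,k)) = 2"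
    using g unfolding GoodC_def A_def by auto
  have ne: "(1::nat,j) \<noteq> (1,(j+1) mod 3)" using mod3ne[of j] by auto
  have "card (A (1,j) \<union> (A (1,(j+1) mod 3) \<union> (A (2,j) \<union> A (2,k)))) = 6"
  proof -
    have d1: "A (2,j) \<inter> A (2,k) = {}" using dis[of "(2,j)" "(2,k)"] jk by simp
    have d2: "A (1,(j+1) mod 3) \<inter> (A (2,j) \<union> A (2,k)) = {}"
      using dis[of "(1,(j+1) mod 3)" "(2,j)"] dis[of "(1,(j+1) mod 3)" "(2,k)"] by (simp add: Int_Un_distrib)
    have d3: "A (1,j) \<inter> (A (1,(j+1) mod 3) \<union> (A (2,j) \<union> A (2,k))) = {}"
      using dis[of "(1,j)" "(1,(j+1) mod 3)"] dis[of "(1,j)" "(2,j)"] dis[of "(1,j)" "(2,k)"] ne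
      by (simp add: Int_Un_distrib)
    have "card (A (2,j) \<union> A (2,k)) = 4" using card_Un_disjoint[OF fA fA d1] c by simp
    then have "card (A (1,(j+1) mod 3) \<union> (A (2,j) \<union> A (2,k))) = 5"
      using card_Un_disjoint[OF fA _ d2] fA c by simp
    then show ?thesis using card_Un_disjoint[OF fA _ d3] fA c by simp
  qed
  moreover have "A (1,j) \<union> (A (1,(j+1) mod 3) \<union> (A (2,j) \<union> A (2,k))) \<subseteq> S" unfolding A_def by auto
  ultimately have "6 \<le> card S" using card_mono[OF S(1)] by metis
  then show False using S(2) by simp
qed

theorem lemma2p1:
  fixes n m :: nat and lab :: "nat \<Rightarrow> nat \<times> nat"
  assumes "n > 0" and "3 dvd n" and "m \<le> n div 3"
    and "valid_labelling n m lab"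
  shows "real (phi n lab) =
           (real m)^2 * (real n - 3 * real m) * (real n - 3 * real m - 3) / 6"
proof -
  note vl = assms(4)
  define G where "G j = {S. S \<subseteq> {1..n} \<and> card S = 4 \<and> GoodC lab j S}" for j
  have eq: "{S. S \<subseteq> {1..n} \<and> card S = 4 \<and> card {e. e \<subseteq> S \<and> is_edge n lab e} = 3} = (\<Union>j\<in>{0,1,2}. G j)"
    unfolding G_def using charac[OF vl] by auto
  have fG: "finite (G j)" for j unfolding G_def by (rule finite_subset[of _ "Pow {1..n}"]) auto
  have disj: "\<forall>i\<in>{0,1,2::nat}. \<forall>j\<in>{0,1,2}. i \<noteq> j \<longrightarrow> G i \<inter> G j = {}"
  proof (intro ballI impI)
    fix i j :: nat assume ij: "i \<in> {0,1,2}" "j \<in> {0,1,2}" "i \<noteq> j"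
    show "G i \<inter> G j = {}"
    proof (rule ccontr)
      assume "G i \<inter> G j \<noteq> {}"
      then obtain S where "S \<in> G i" "S \<in> G j" by blast
      then have "S \<subseteq> {1..n}" "card S = 4" "GoodC lab i S" "GoodC lab j S" unfolding G_def by auto
      then show False using good_unique[of S lab i j] ij(3) finite_subset[of S "{1..n}"] by auto
    qed
  qed
  define p where "p = n div 3 - m"
  have cG: "j \<in> {0,1,2} \<Longrightarrow> card (G j) = m * m * (p choose 2)" for j
    unfolding G_def p_def using card_G[OF vl] by blast
  have "phi n lab = (\<Sum>j\<in>{0,1,2::nat}. card (G j))"
    unfolding phi_def eq by (rule card_UN_disjoint) (use fG disj in auto)
  also have "\<dots> = 3 * (m * m * (p choose 2))" using cG by simp
  finally have ph: "phi n lab = 3 * (m * m * (p choose 2))" .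
  have ev: "even (p * (p - 1))" by auto
  have two: "2 * (p choose 2) = p * (p - 1)" unfolding choose_two using ev by simp
  have r2: "2 * real (p choose 2) = real p * (real p - 1)"
  proof (cases "p = 0")
    case True then show ?thesis by simp
  next
    case False
    have "real (2 * (p choose 2)) = real (p * (p - 1))" using two by simp
    then show ?thesis using False by (simp add: of_nat_diff)
  qed
  obtain k where k: "n = 3 * k" using assms(2) by blast
  have rp: "real n - 3 * real m = 3 * real p"
    unfolding p_def k using assms(3) k by (simp add: of_nat_diff)
  have C: "real (p choose 2) = real p * (real p - 1) / 2" using r2 by simp
  show ?thesis unfolding ph rp
    by (simp add: C power2_eq_square field_simps)
qed


end
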